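(* For every cardinal $\kappa$ there is a regular cardinal $\lambda>\kappa$ such that $\mathrm{Gal}(\mathcal{D}_\lambda,\lambda,2^\lambda)$ holds. In particular, it is impossible that $\mathrm{Gal}(\mathcal{D}_\theta,\theta,2^\theta)$ fails for every regular uncountable cardinal $\theta$.
   Context: For a regular uncountable cardinal $\theta$, $\mathcal{D}_\theta$ denotes the club filter on $\theta$. For a filter $\mathcal{F}$ and cardinals $\mu\leq\lambda$, $\mathrm{Gal}(\mathcal{F},\mu,\lambda)$ is the statement: for every $\mathcal{C}\subseteq\mathcal{F}$ with $|\mathcal{C}|=\lambda$ there is $\mathcal{E}\subseteq\mathcal{C}$ with $|\mathcal{E}|=\mu$ such that $\bigcap\mathcal{E}\in\mathcal{F}$. *)

theory Defs
  imports Main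
begin

text \<open>A cardinal lambda is represented by a set L together with a cardinal
  well-order r on L (card_order_on L r); the strict order of the ordinal lambda
  is (x,y) in r with x different from y.\<close>

definition strict_below :: "'b rel \<Rightarrow> 'b \<Rightarrow> 'b \<Rightarrow> bool" where
  "strict_below r x y \<longleftrightarrow> (x, y) \<in> r \<and> x \<noteq> y"

definition unbounded_in :: "'b set \<Rightarrow> 'b rel \<Rightarrow> 'b set \<Rightarrow> bool" where
  "unbounded_in L r C \<longleftrightarrow> (\<forall>a\<in>L. \<exists>c\<in>C. strict_below r a c)"

definition closed_in :: "'b set \<Rightarrow> 'b rel \<Rightarrow> 'b set \<Rightarrow> bool" where
  "closed_in L r C \<longleftrightarrow>
     (\<forall>a\<in>L. (\<exists>c\<in>C. strict_below r c a) \<and>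
             (\<forall>b. strict_below r b a \<longrightarrow> (\<exists>c\<in>C. strict_below r b c \<and> strict_below r c a))
             \<longrightarrow> a \<in> C)"

definition club :: "'b set \<Rightarrow> 'b rel \<Rightarrow> 'b set \<Rightarrow> bool" where
  "club L r C \<longleftrightarrow> C \<subseteq> L \<and> unbounded_in L r C \<and> closed_in L r C"

definition club_filter :: "'b set \<Rightarrow> 'b rel \<Rightarrow> 'b set set" where
  "club_filter L r = {X. X \<subseteq> L \<and> (\<exists>C. club L r C \<and> C \<subseteq> X)}"

definition Gal :: "'b set set \<Rightarrow> 'c rel \<Rightarrow> 'd rel \<Rightarrow> bool" where
  "Gal F mu la \<longleftrightarrow>
     (\<forall>CC. CC \<subseteq> F \<and> (card_of CC, la) \<in> ordIso \<longrightarrow> (\<exists>EE. EE \<subseteq> CC \<and> (card_of EE, mu) \<in> ordIso \<and> \<Inter>EE \<in> F))"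

end

theory Submission
  imports Defs
begin
context includes cardinal_syntax begin

lemma pow_mono: "|A| \<le>o |B| \<Longrightarrow> |Pow A| \<le>o |Pow B|"
proof -
  assume "|A| \<le>o |B|"
  then obtain f where f: "inj_on f A" "f ` A \<subseteq> B" using card_of_ordLeq by metis
  have "inj_on (image f) (Pow A)" using f(1) inj_on_image_Pow by blast
  moreover have "image f ` Pow A \<subseteq> Pow B" using f(2) by auto
  ultimately show ?thesis using card_of_ordLeq by metis
qed

lemma co_wo: "Card_order r \<Longrightarrow> wo_rel r"
  unfolding wo_rel_def card_order_on_def by simp

lemma co_trans: "Card_order r \<Longrightarrow> (x,y) \<in> r \<Longrightarrow> (y,z) \<in> r \<Longrightarrow> (x,z) \<in> r"
  using wo_rel.TRANS[OF co_wo] by (auto dest: transD)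

lemma co_antisym: "Card_order r \<Longrightarrow> (x,y) \<in> r \<Longrightarrow> (y,x) \<in> r \<Longrightarrow> x = y"
  using wo_rel.ANTISYM[OF co_wo] by (auto dest: antisymD)

lemma co_total: "Card_order r \<Longrightarrow> x \<in> Field r \<Longrightarrow> y \<in> Field r \<Longrightarrow> (x,y) \<in> r \<or> (y,x) \<in> r"
  using wo_rel.TOTALS[OF co_wo] by blast

lemma co_refl: "Card_order r \<Longrightarrow> x \<in> Field r \<Longrightarrow> (x,x) \<in> r"
  using wo_rel.REFL[OF co_wo] by (auto simp: refl_on_def)

lemma co_field1: "(x,y) \<in> r \<Longrightarrow> x \<in> Field r" by (auto simp: Field_def)
lemma co_field2: "(x,y) \<in> r \<Longrightarrow> y \<in> Field r" by (auto simp: Field_def)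

lemma sb_le_trans: "Card_order r \<Longrightarrow> strict_below r x y \<Longrightarrow> (y,z) \<in> r \<Longrightarrow> strict_below r x z"
  unfolding strict_below_def using co_trans[of r] co_antisym[of r] by blast

lemma le_sb_trans: "Card_order r \<Longrightarrow> (x,y) \<in> r \<Longrightarrow> strict_below r y z \<Longrightarrow> strict_below r x z"
  unfolding strict_below_def using co_trans[of r] co_antisym[of r] by blast

lemma sb_trans: "Card_order r \<Longrightarrow> strict_below r x y \<Longrightarrow> strict_below r y z \<Longrightarrow> strict_below r x z"
  unfolding strict_below_def using co_trans[of r] co_antisym[of r] by blast

lemma not_sb: "Card_order r \<Longrightarrow> x \<in> Field r \<Longrightarrow> y \<in> Field r \<Longrightarrow> \<not> strict_below r x y \<Longrightarrow> (y,x) \<in> r"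
  unfolding strict_below_def using co_total[of r x y] co_refl[of r x] by blast

lemma club_unbD: "club L r C \<Longrightarrow> a \<in> L \<Longrightarrow> \<exists>c\<in>C. strict_below r a c"
  unfolding club_def unbounded_in_def by blast

lemma club_subD: "club L r C \<Longrightarrow> C \<subseteq> L"
  unfolding club_def by blast

lemma club_closedD: "club L r C \<Longrightarrow> a \<in> L \<Longrightarrow> (\<exists>c\<in>C. strict_below r c a) \<Longrightarrow>
   (\<forall>b. strict_below r b a \<longrightarrow> (\<exists>c\<in>C. strict_below r b c \<and> strict_below r c a)) \<Longrightarrow> a \<in> C"
  unfolding club_def closed_in_def by blast

lemma clubI: "C \<subseteq> L \<Longrightarrow> (\<And>a. a \<in> L \<Longrightarrow> \<exists>c\<in>C. strict_below r a c) \<Longrightarrow>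
   (\<And>a. a \<in> L \<Longrightarrow> (\<exists>c\<in>C. strict_below r c a) \<Longrightarrow>
   (\<forall>b. strict_below r b a \<longrightarrow> (\<exists>c\<in>C. strict_below r b c \<and> strict_below r c a)) \<Longrightarrow> a \<in> C) \<Longrightarrow> club L r C"
  unfolding club_def closed_in_def unbounded_in_def by blast

lemma sb_field1: "strict_below r x y \<Longrightarrow> x \<in> Field r"
  unfolding strict_below_def by (auto simp: Field_def)

lemma no_max:
  assumes r: "Card_order r" and inf: "\<not> finite (Field r)" and a: "a \<in> Field r"
  shows "\<exists>b\<in>Field r. strict_below r a b"
proof -
  have "Field r \<noteq> under r a" using Card_order_infinite_not_under[OF r inf] by blast
  moreover have "under r a \<subseteq> Field r" by (auto simp: under_def Field_def)
  ultimately obtain b where b: "b \<in> Field r" "(b,a) \<notin> r" by (auto simp: under_def)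
  then have "(a,b) \<in> r" "a \<noteq> b" using co_total[OF r a b(1)] co_refl[OF r a] by auto
  then show ?thesis using b unfolding strict_below_def by blast
qed

lemma bound:
  assumes r: "Card_order r" and inf: "\<not> finite (Field r)" and reg: "regularCard r"
    and S: "S \<subseteq> Field r" and small: "|S| <o r"
  shows "\<exists>a\<in>Field r. \<forall>s\<in>S. strict_below r s a"
proof -
  have "\<not> cofinal S r"
  proof
    assume "cofinal S r"
    then have "|S| =o r" using reg S unfolding regularCard_def by blast
    then show False using small not_ordLess_ordIso by blast
  qed
  then obtain a where a: "a \<in> Field r" "\<forall>b\<in>S. a = b \<or> (a,b) \<notin> r"
    unfolding cofinal_def by blast
  have le: "\<forall>b\<in>S. (b,a) \<in> r"
  proof
    fix b assume b: "b \<in> S"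
    then have bF: "b \<in> Field r" using S by blast
    show "(b,a) \<in> r"
    proof (cases "a = b")
      case True then show ?thesis using co_refl[OF r a(1)] by simp
    next
      case False then have "(a,b) \<notin> r" using a b by blast
      then show ?thesis using co_total[OF r a(1) bF] by blast
    qed
  qed
  obtain a' where a': "a' \<in> Field r" "strict_below r a a'" using no_max[OF r inf a(1)] by blast
  show ?thesis
  proof (intro bexI ballI)
    fix s assume "s \<in> S" then show "strict_below r s a'" using le a'(2) le_sb_trans[OF r] by blast
  qed (rule a'(1))
qed

lemma under_small:
  assumes r: "Card_order r" and inf: "\<not> finite (Field r)" and a: "a \<in> Field r"
  shows "|under r a| <o r"
proof -
  obtain b where b: "b \<in> Field r" "strict_below r a b" using no_max[OF r inf a] by blast
  have "under r a \<subseteq> underS r b"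
    using b le_sb_trans[OF r] unfolding under_def underS_def strict_below_def by blast
  then show ?thesis using card_of_mono1 card_of_underS[OF r b(1)] ordLeq_ordLess_trans by blast
qed

lemma finite_small:
  assumes r: "Card_order r" and inf: "\<not> finite (Field r)" and "finite S"
  shows "|S| <o r"
proof -
  have "|S| <o |Field r|"
    using finite_ordLess_infinite[OF card_of_Well_order card_of_Well_order] assms by (simp add: Field_card_of)
  then show ?thesis using card_of_Field_ordIso[OF r] ordLess_ordIso_trans by blast
qed

end
context includes cardinal_syntax begin

lemma next_exists:
  assumes r: "Card_order r" and inf: "\<not> finite (Field r)" and reg: "regularCard r"
    and G: "club (Field r) r G" and c: "\<And>i. i \<in> Field r \<Longrightarrow> club (Field r) r (c i)"
    and x: "x \<in> Field r"
  shows "\<exists>y. y \<in> Field r \<and> strict_below r x y \<and>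
     (\<forall>i. (i,x) \<in> r \<longrightarrow> (\<exists>z\<in>c i. strict_below r x z \<and> (z,y) \<in> r)) \<and>
     (\<exists>z\<in>G. strict_below r x z \<and> (z,y) \<in> r)"
proof -
  define w where "w i = (SOME z. z \<in> c i \<and> strict_below r x z)" for i
  have w: "w i \<in> c i \<and> strict_below r x (w i)" if "(i,x) \<in> r" for i
  proof -
    have "i \<in> Field r" using that by (rule co_field1)
    then have "\<exists>z\<in>c i. strict_below r x z" using club_unbD[OF c x] by simp
    then have "\<exists>z. z \<in> c i \<and> strict_below r x z" by blast
    then show ?thesis unfolding w_def by (rule someI_ex)
  qed
  obtain g where g: "g \<in> G" "strict_below r x g" using club_unbD[OF G x] by blast
  define S where "S = w ` under r x \<union> {g, x}"
  have Ssub: "S \<subseteq> Field r"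
  proof -
    have "w i \<in> Field r" if "i \<in> under r x" for i
    proof -
      have ix: "(i,x) \<in> r" using that by (simp add: under_def)
      have "i \<in> Field r" using ix by (rule co_field1)
      then show ?thesis using w[OF ix] club_subD[OF c] by blast
    qed
    moreover have "g \<in> Field r" using g club_subD[OF G] by blast
    ultimately show ?thesis using x unfolding S_def by blast
  qed
  have "|w ` under r x| <o r"
    using card_of_image under_small[OF r inf x] ordLeq_ordLess_trans by blast
  moreover have "|{g,x}| <o r" by (rule finite_small[OF r inf]) simp
  ultimately have "|S| <o r" unfolding S_def using card_of_Un_ordLess_infinite_Field[OF inf r] by blast
  then obtain y where y: "y \<in> Field r" "\<forall>s\<in>S. strict_below r s y"
    using bound[OF r inf reg Ssub] by blast
  show ?thesis
  proof (intro exI conjI allI impI)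
    show "y \<in> Field r" by fact
    show "strict_below r x y" using y unfolding S_def by blast
    show "\<exists>z\<in>c i. strict_below r x z \<and> (z, y) \<in> r" if ix: "(i,x) \<in> r" for i
    proof -
      have "w i \<in> S" using ix unfolding S_def under_def by blast
      then have "(w i, y) \<in> r" using y unfolding strict_below_def by blast
      then show ?thesis using w[OF ix] by blast
    qed
    show "\<exists>z\<in>G. strict_below r x z \<and> (z, y) \<in> r"
    proof -
      have "g \<in> S" unfolding S_def by blast
      then have "(g, y) \<in> r" using y unfolding strict_below_def by blast
      then show ?thesis using g by blast
    qed
  qed
qed

end
context includes cardinal_syntax begin

lemma diag_club:
  assumes r: "Card_order r" and inf: "\<not> finite (Field r)" and reg: "regularCard r"
    and nat: "|UNIV::nat set| <o r"
    and G: "club (Field r) r G" and c: "\<And>i. i \<in> Field r \<Longrightarrow> club (Field r) r (c i)"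
  shows "club (Field r) r {d\<in>G. \<forall>i. strict_below r i d \<longrightarrow> d \<in> c i}"
    (is "club _ _ ?D")
proof (rule clubI)
  have GF: "G \<subseteq> Field r" using G by (rule club_subD)
  then show "?D \<subseteq> Field r" by blast
next
  fix a assume a: "a \<in> Field r"
    and lim1: "\<exists>c\<in>?D. strict_below r c a"
    and lim: "\<forall>b. strict_below r b a \<longrightarrow> (\<exists>c\<in>?D. strict_below r b c \<and> strict_below r c a)"
  have "\<exists>c\<in>G. strict_below r c a" using lim1 by blast
  moreover have "\<forall>b. strict_below r b a \<longrightarrow> (\<exists>c\<in>G. strict_below r b c \<and> strict_below r c a)"
    using lim by blast
  ultimately have "a \<in> G" using club_closedD[OF G a] by blast
  moreover have "a \<in> c i" if ia: "strict_below r i a" for i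
  proof -
    have iF: "i \<in> Field r" using ia by (rule sb_field1)
    obtain d where d: "d \<in> ?D" "strict_below r i d" "strict_below r d a" using lim ia by blast
    have "\<exists>e\<in>c i. strict_below r b e \<and> strict_below r e a" if ba: "strict_below r b a" for b
    proof -
      have bF: "b \<in> Field r" using ba by (rule sb_field1)
      define m where "m = (if (b,i) \<in> r then i else b)"
      have m1: "(b,m) \<in> r" "(i,m) \<in> r" "strict_below r m a"
        using co_total[OF r bF iF] co_refl[OF r bF] co_refl[OF r iF] ia ba unfolding m_def by auto
      obtain e where e: "e \<in> ?D" "strict_below r m e" "strict_below r e a" using lim m1(3) by blast
      have "strict_below r i e" using le_sb_trans[OF r m1(2) e(2)] .
      moreover have "strict_below r b e" using le_sb_trans[OF r m1(1) e(2)] .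
      ultimately show ?thesis using e by blast
    qed
    moreover have "d \<in> c i" using d by blast
    ultimately show ?thesis using club_closedD[OF c[OF iF] a] d by blast
  qed
  ultimately show "a \<in> ?D" by blast
next
  fix a assume a: "a \<in> Field r"
  define P where "P x y \<longleftrightarrow> y \<in> Field r \<and> strict_below r x y \<and>
     (\<forall>i. (i,x) \<in> r \<longrightarrow> (\<exists>z\<in>c i. strict_below r x z \<and> (z,y) \<in> r)) \<and>
     (\<exists>z\<in>G. strict_below r x z \<and> (z,y) \<in> r)" for x y
  define nx where "nx x = (SOME y. P x y)" for x
  have nxP: "P x (nx x)" if "x \<in> Field r" for x
  proof -
    have "\<exists>y. P x y" unfolding P_def by (rule next_exists[OF r inf reg G c that])
    then show ?thesis unfolding nx_def by (rule someI_ex)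
  qed
  define s where "s = rec_nat a (\<lambda>_ x. nx x)"
  have s0: "s 0 = a" and sS: "s (Suc n) = nx (s n)" for n unfolding s_def by simp_all
  have sF: "s n \<in> Field r" for n
  proof (induction n)
    case 0 then show ?case using a s0 by simp
  next
    case (Suc n) then show ?case using nxP[OF Suc] sS[of n] unfolding P_def by simp
  qed
  have sP: "P (s n) (s (Suc n))" for n using nxP[OF sF[of n]] sS[of n] by simp
  have sstep: "strict_below r (s n) (s (Suc n))" for n using sP[of n] unfolding P_def by blast
  have smono: "(s n, s (n + k)) \<in> r" for n k
  proof (induction k)
    case 0 then show ?case using co_refl[OF r sF] by simp
  next
    case (Suc k)
    have "(s (n+k), s (Suc (n+k))) \<in> r" using sstep[of "n+k"] unfolding strict_below_def by blast
    then show ?case using co_trans[OF r Suc] by simp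
  qed
  have smono': "(s n, s m) \<in> r" if "n \<le> m" for n m
    using smono[of n "m - n"] that by simp
  have "|range s| <o r" using card_of_image nat ordLeq_ordLess_trans by blast
  moreover have "range s \<subseteq> Field r" using sF by blast
  ultimately obtain z where z: "z \<in> Field r" "\<forall>t\<in>range s. strict_below r t z"
    using bound[OF r inf reg] by blast
  define U where "U = {z\<in>Field r. \<forall>n. strict_below r (s n) z}"
  have "z \<in> U" using z unfolding U_def by blast
  then have Une: "U \<noteq> {}" by blast
  have Usub: "U \<subseteq> Field r" unfolding U_def by blast
  have WL: "Well_order r" "Linear_order r"
    using r unfolding card_order_on_def well_order_on_def by auto
  obtain d where d: "d \<in> U" "\<forall>u\<in>U. (d,u) \<in> r"
    using Linear_order_Well_order_iff[OF WL(2)] WL(1) Une Usub by blast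
  have dF: "d \<in> Field r" and ds: "\<And>n. strict_below r (s n) d" using d unfolding U_def by auto
  have key: "\<exists>n. strict_below r b (s n)" if bd: "strict_below r b d" for b
  proof (rule ccontr)
    assume nk: "\<not> (\<exists>n. strict_below r b (s n))"
    have bF: "b \<in> Field r" using bd by (rule sb_field1)
    have "strict_below r (s n) b" for n
    proof -
      have "(s (Suc n), b) \<in> r" using not_sb[OF r bF sF] nk by blast
      then show ?thesis using sb_le_trans[OF r sstep[of n]] by blast
    qed
    then have "b \<in> U" using bF unfolding U_def by blast
    then have "(d,b) \<in> r" using d by blast
    then show False using bd co_antisym[OF r] unfolding strict_below_def by blast
  qed
  have "d \<in> G"
  proof (rule club_closedD[OF G dF])
    obtain e where e: "e \<in> G" "(e, s 1) \<in> r" using sP[of 0] unfolding P_def by auto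
    have "strict_below r e d" using le_sb_trans[OF r e(2) ds[of 1]] .
    then show "\<exists>e\<in>G. strict_below r e d" using e by blast
    show "\<forall>b. strict_below r b d \<longrightarrow> (\<exists>e\<in>G. strict_below r b e \<and> strict_below r e d)"
    proof (intro allI impI)
      fix b assume "strict_below r b d"
      then obtain n where n: "strict_below r b (s n)" using key by blast
      obtain e where e: "e \<in> G" "strict_below r (s n) e" "(e, s (Suc n)) \<in> r" using sP[of n] unfolding P_def by auto
      have "strict_below r e d" using le_sb_trans[OF r e(3) ds[of "Suc n"]] .
      moreover have "strict_below r b e" using sb_trans[OF r n e(2)] .
      ultimately show "\<exists>e\<in>G. strict_below r b e \<and> strict_below r e d" using e by blast
    qed
  qed
  moreover have "d \<in> c i" if id: "strict_below r i d" for i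
  proof -
    have iF: "i \<in> Field r" using id by (rule sb_field1)
    obtain m where m: "strict_below r i (s m)" using key id by blast
    have ex: "\<exists>e\<in>c i. strict_below r (s k) e \<and> strict_below r e d" if mk: "m \<le> k" for k
    proof -
      have "(i, s m) \<in> r" using m unfolding strict_below_def by blast
      then have "(i, s k) \<in> r" using co_trans[OF r _ smono'[OF mk]] by blast
      then obtain e where e: "e \<in> c i" "strict_below r (s k) e" "(e, s (Suc k)) \<in> r"
        using sP[of k] unfolding P_def by blast
      have "strict_below r e d" using le_sb_trans[OF r e(3) ds[of "Suc k"]] .
      then show ?thesis using e by blast
    qed
    show ?thesis
    proof (rule club_closedD[OF c[OF iF] dF])
      show "\<exists>e\<in>c i. strict_below r e d" using ex[of m] by blast
      show "\<forall>b. strict_below r b d \<longrightarrow> (\<exists>e\<in>c i. strict_below r b e \<and> strict_below r e d)"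
      proof (intro allI impI)
        fix b assume "strict_below r b d"
        then obtain n where n: "strict_below r b (s n)" using key by blast
        obtain e where e: "e \<in> c i" "strict_below r (s (max n m)) e" "strict_below r e d"
          using ex[of "max n m"] by auto
        have "strict_below r b (s (max n m))" using sb_le_trans[OF r n smono'[of n "max n m"]] by simp
        then have "strict_below r b e" using sb_trans[OF r _ e(2)] by blast
        then show "\<exists>e\<in>c i. strict_below r b e \<and> strict_below r e d" using e by blast
      qed
    qed
  qed
  ultimately have "d \<in> ?D" by blast
  moreover have "strict_below r a d" using ds[of 0] s0 by simp
  ultimately show "\<exists>d\<in>?D. strict_below r a d" by blast
qed

end
context includes cardinal_syntax begin

lemma transport_small:
  fixes L :: "'c set" and X :: "'d set"
  assumes P: "\<forall>A::'c set. |A| <o |L| \<longrightarrow> |Pow A| \<le>o Z" and X: "|X| <o |L|"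
  shows "|Pow X| \<le>o Z"
proof -
  obtain g where g: "inj_on g X" "g ` X \<subseteq> L" using X ordLess_imp_ordLeq card_of_ordLeq by metis
  have "bij_betw g X (g ` X)" using g(1) by (simp add: bij_betw_imageI)
  then have iso: "|X| =o |g ` X|" by (rule card_of_ordIsoI)
  then have "|g ` X| <o |L|" using X ordIso_symmetric ordIso_ordLess_trans by blast
  then have "|Pow (g ` X)| \<le>o Z" using P by blast
  moreover have "|Pow X| \<le>o |Pow (g ` X)|" using pow_mono iso ordIso_imp_ordLeq by blast
  ultimately show ?thesis using ordLeq_transitive by blast
qed

lemma times_small:
  assumes r: "Card_order r" and A: "|A| <o r" and B: "|B| <o r" and infB: "\<not> finite B"
  shows "|A \<times> B| <o r"
proof (cases "|A| \<le>o |B|")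
  case True
  have "|A \<times> B| \<le>o |B \<times> B|" using True card_of_Times_mono1 by blast
  also have "|B \<times> B| =o |B|" using card_of_Times_same_infinite[OF infB] .
  finally show ?thesis using B ordLeq_ordLess_trans by blast
next
  case False
  then have BA: "|B| \<le>o |A|" using ordLess_or_ordLeq[OF card_of_Well_order card_of_Well_order] ordLess_imp_ordLeq by blast
  then have infA: "\<not> finite A" using infB card_of_ordLeq_finite by blast
  have "|A \<times> B| \<le>o |A \<times> A|" using BA card_of_Times_mono2 by blast
  also have "|A \<times> A| =o |A|" using card_of_Times_same_infinite[OF infA] .
  finally show ?thesis using A ordLeq_ordLess_trans by blast
qed

lemma regular_from_min:
  fixes r :: "'a rel" and B :: "'b set"
  assumes r: "Card_order r" and inf: "\<not> finite (Field r)" and Br: "|B| <o r" and infB: "\<not> finite B"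
    and P1: "\<And>X::'a set. |X| <o r \<Longrightarrow> |Pow X| \<le>o |Pow B|"
    and P2: "\<And>X::('a \<times> 'b) set. |X| <o r \<Longrightarrow> |Pow X| \<le>o |Pow B|"
    and big: "|Pow B| <o |Pow (Field r)|"
  shows "regularCard r"
  unfolding regularCard_def
proof (intro allI impI)
  fix K0 assume K0: "K0 \<subseteq> Field r \<and> cofinal K0 r"
  show "|K0| =o r"
  proof (rule ccontr)
    assume ne: "\<not> |K0| =o r"
    have "|K0| \<le>o r" using K0 card_of_mono1 card_of_Field_ordIso[OF r] ordLeq_ordIso_trans by blast
    then have K0s: "|K0| <o r" using ne ordLeq_iff_ordLess_or_ordIso by blast
    have ex: "\<exists>e. inj_on e (Pow (underS r k)) \<and> e ` Pow (underS r k) \<subseteq> Pow B" if "k \<in> Field r" for k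
      using P1[OF card_of_underS[OF r that]] card_of_ordLeq by metis
    define E where "E k = (SOME e. inj_on e (Pow (underS r k)) \<and> e ` Pow (underS r k) \<subseteq> Pow B)" for k
    have E: "inj_on (E k) (Pow (underS r k)) \<and> E k ` Pow (underS r k) \<subseteq> Pow B" if "k \<in> Field r" for k
      using ex[OF that] unfolding E_def by (metis (mono_tags, lifting) someI_ex)
    define Phi where "Phi X = {(k,b). k \<in> K0 \<and> b \<in> E k (X \<inter> underS r k)}" for X
    have "inj_on Phi (Pow (Field r))"
    proof (rule inj_onI)
      fix X Y assume X: "X \<in> Pow (Field r)" and Y: "Y \<in> Pow (Field r)" and eq: "Phi X = Phi Y"
      have eqk: "X \<inter> underS r k = Y \<inter> underS r k" if k: "k \<in> K0" for k
      proof -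
        have kF: "k \<in> Field r" using k K0 by blast
        have "E k (X \<inter> underS r k) = E k (Y \<inter> underS r k)"
        proof -
          have "E k (X \<inter> underS r k) = {b. (k,b) \<in> Phi X}" using k unfolding Phi_def by auto
          also have "\<dots> = {b. (k,b) \<in> Phi Y}" using eq by simp
          also have "\<dots> = E k (Y \<inter> underS r k)" using k unfolding Phi_def by auto
          finally show ?thesis .
        qed
        then show ?thesis using E[OF kF] unfolding inj_on_def by blast
      qed
      show "X = Y"
      proof
        show "X \<subseteq> Y"
        proof
          fix a assume a: "a \<in> X"
          then have "a \<in> Field r" using X by blast
          then obtain k where "k \<in> K0" "a \<noteq> k" "(a,k) \<in> r" using K0 unfolding cofinal_def by blast
          then show "a \<in> Y" using eqk a unfolding underS_def by blast
        qed
      next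
        show "Y \<subseteq> X"
        proof
          fix a assume a: "a \<in> Y"
          then have "a \<in> Field r" using Y by blast
          then obtain k where "k \<in> K0" "a \<noteq> k" "(a,k) \<in> r" using K0 unfolding cofinal_def by blast
          then show "a \<in> X" using eqk a unfolding underS_def by blast
        qed
      qed
    qed
    moreover have "Phi ` Pow (Field r) \<subseteq> Pow (K0 \<times> B)"
    proof
      fix Z assume "Z \<in> Phi ` Pow (Field r)"
      then obtain X where X: "X \<subseteq> Field r" "Z = Phi X" by blast
      have "E k (X \<inter> underS r k) \<subseteq> B" if "k \<in> K0" for k
        using E[of k] that K0 by blast
      then show "Z \<in> Pow (K0 \<times> B)" unfolding X Phi_def by blast
    qed
    ultimately have "|Pow (Field r)| \<le>o |Pow (K0 \<times> B)|" using card_of_ordLeq by metis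
    also have "|Pow (K0 \<times> B)| \<le>o |Pow B|" using P2 times_small[OF r K0s Br infB] by blast
    finally show False using big not_ordLess_ordLeq by blast
  qed
qed

lemma neg_aux: "\<not>(\<exists>H\<in>C. \<forall>g\<in>F. \<exists>X\<in>C. X \<noteq> H \<and> R X H g) \<Longrightarrow> H \<in> C \<Longrightarrow> \<exists>g. g\<in>F \<and> (\<forall>X\<in>C. R X H g \<longrightarrow> X = H)"
  by blast

lemma tree:
  fixes r :: "'a rel" and B :: "'b set"
  assumes r: "Card_order r" and inf: "\<not> finite (Field r)" and infB: "\<not> finite B"
    and P1: "\<And>X::'a set. |X| <o r \<Longrightarrow> |Pow X| \<le>o |Pow B|"
    and FB: "|Field r| \<le>o |Pow B|"
    and big: "|Pow B| <o |Pow (Field r)|"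
    and CC: "CC \<subseteq> Pow (Field r)" and CCc: "|CC| =o |Pow (Field r)|"
  shows "\<exists>H\<in>CC. \<forall>g\<in>Field r. \<exists>X\<in>CC. X \<noteq> H \<and> X \<inter> under r g = H \<inter> under r g"
proof (rule ccontr)
  assume nt: "\<not> ?thesis"
  define Q where "Q H g \<longleftrightarrow> g \<in> Field r \<and> (\<forall>X\<in>CC. X \<inter> under r g = H \<inter> under r g \<longrightarrow> X = H)" for H g
  have exQ: "\<exists>g. Q H g" if "H \<in> CC" for H
    unfolding Q_def using neg_aux[of CC "Field r" "\<lambda>X H g. X \<inter> under r g = H \<inter> under r g", OF nt that] .
  define gH where "gH H = (SOME g. Q H g)" for H
  have gH: "Q H (gH H)" if "H \<in> CC" for H
    unfolding gH_def using exQ[OF that] by (rule someI_ex)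
  have ex: "\<exists>e. inj_on e (Pow (under r k)) \<and> e ` Pow (under r k) \<subseteq> Pow B" if "k \<in> Field r" for k
  proof -
    have "|Pow (under r k)| \<le>o |Pow B|" using P1[OF under_small[OF r inf that]] .
    then show ?thesis using card_of_ordLeq[of "Pow (under r k)" "Pow B"] by simp
  qed
  define E where "E k = (SOME e. inj_on e (Pow (under r k)) \<and> e ` Pow (under r k) \<subseteq> Pow B)" for k
  have E: "inj_on (E k) (Pow (under r k)) \<and> E k ` Pow (under r k) \<subseteq> Pow B" if "k \<in> Field r" for k
    unfolding E_def using ex[OF that] by (rule someI_ex)
  define Psi where "Psi H = (gH H, E (gH H) (H \<inter> under r (gH H)))" for H
  have "inj_on Psi CC"
  proof (rule inj_onI)
    fix H1 H2 assume H1: "H1 \<in> CC" and H2: "H2 \<in> CC" and eq: "Psi H1 = Psi H2"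
    have g: "gH H1 = gH H2" using eq unfolding Psi_def by simp
    have e: "E (gH H1) (H1 \<inter> under r (gH H1)) = E (gH H1) (H2 \<inter> under r (gH H1))"
      using eq g unfolding Psi_def by simp
    have gF: "gH H1 \<in> Field r" using gH[OF H1] unfolding Q_def by blast
    have inj: "inj_on (E (gH H1)) (Pow (under r (gH H1)))" using E[OF gF] by blast
    have "H1 \<inter> under r (gH H1) = H2 \<inter> under r (gH H1)"
      using inj_onD[OF inj e] by blast
    then have "H1 \<inter> under r (gH H2) = H2 \<inter> under r (gH H2)" using g by simp
    then show "H1 = H2" using gH[OF H2] H1 unfolding Q_def by blast
  qed
  moreover have "Psi ` CC \<subseteq> Field r \<times> Pow B"
  proof
    fix p assume "p \<in> Psi ` CC"
    then obtain H where H: "H \<in> CC" "p = Psi H" by blast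
    have gF: "gH H \<in> Field r" using gH[OF H(1)] unfolding Q_def by blast
    have "H \<inter> under r (gH H) \<in> Pow (under r (gH H))" by blast
    then have "E (gH H) (H \<inter> under r (gH H)) \<in> Pow B" using E[OF gF] by blast
    then show "p \<in> Field r \<times> Pow B" using gF H(2) unfolding Psi_def by simp
  qed
  ultimately have "|CC| \<le>o |Field r \<times> Pow B|" by (intro card_of_ordLeqI[of Psi]) auto
  also have "|Field r \<times> Pow B| \<le>o |Pow B \<times> Pow B|" using FB card_of_Times_mono1 by blast
  also have "|Pow B \<times> Pow B| =o |Pow B|" using card_of_Times_same_infinite infB by auto
  finally have "|CC| \<le>o |Pow B|" .
  then have "|Pow (Field r)| \<le>o |Pow B|" using CCc ordIso_symmetric ordIso_ordLeq_trans by blast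
  then show False using big not_ordLess_ordLeq by blast
qed

end
context includes cardinal_syntax begin

lemma gal_main:
  fixes L :: "'a set" and B :: "'b set"
  assumes r: "r = |L|" and inf: "\<not> finite L" and reg: "regularCard r" and nat: "|UNIV::nat set| <o r"
    and infB: "\<not> finite B"
    and P1: "\<And>X::'a set. |X| <o r \<Longrightarrow> |Pow X| \<le>o |Pow B|"
    and FB: "|L| \<le>o |Pow B|"
    and big: "|Pow B| <o |Pow L|"
  shows "Gal (club_filter L r) r |Pow L|"
  unfolding Gal_def
proof (intro allI impI)
  have ro: "Card_order r" using r card_of_Card_order by simp
  have Fr: "Field r = L" using r Field_card_of by simp
  have infr: "\<not> finite (Field r)" using inf Fr by simp
  fix CC assume CC: "CC \<subseteq> club_filter L r \<and> |CC| =o |Pow L|"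
  have CCP: "CC \<subseteq> Pow (Field r)" using CC Fr unfolding club_filter_def by blast
  have FB': "|Field r| \<le>o |Pow B|" using FB Fr by simp
  have big': "|Pow B| <o |Pow (Field r)|" using big Fr by simp
  have CCc: "|CC| =o |Pow (Field r)|" using CC Fr by simp
  obtain H where H: "H \<in> CC" "\<forall>g\<in>Field r. \<exists>X\<in>CC. X \<noteq> H \<and> X \<inter> under r g = H \<inter> under r g"
    using tree[OF ro infr infB P1 FB' big' CCP CCc] by blast
  then obtain X where X: "\<And>g. g \<in> L \<Longrightarrow> X g \<in> CC \<and> X g \<noteq> H \<and> X g \<inter> under r g = H \<inter> under r g"
    using Fr by metis
  define cl where "cl Y = (SOME C. club L r C \<and> C \<subseteq> Y)" for Y
  have cl: "club L r (cl Y) \<and> cl Y \<subseteq> Y" if "Y \<in> CC" for Y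
  proof -
    have "\<exists>C. club L r C \<and> C \<subseteq> Y" using that CC unfolding club_filter_def by blast
    then show ?thesis unfolding cl_def by (metis (mono_tags, lifting) someI_ex)
  qed
  define D where "D = {d\<in>cl H. \<forall>i. strict_below r i d \<longrightarrow> d \<in> cl (X i)}"
  have clubD: "club L r D"
    unfolding D_def
  proof -
    have "club (Field r) r (cl H)" using cl[OF H(1)] Fr by simp
    moreover have "\<And>i. i \<in> Field r \<Longrightarrow> club (Field r) r (cl (X i))" using cl X Fr by simp
    ultimately have "club (Field r) r {d \<in> cl H. \<forall>i. strict_below r i d \<longrightarrow> d \<in> cl (X i)}"
      by (rule diag_club[OF ro infr reg nat])
    then show "club L r {d \<in> cl H. \<forall>i. strict_below r i d \<longrightarrow> d \<in> cl (X i)}" using Fr by simp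
  qed
  define EE where "EE = X ` L"
  have EEsub: "EE \<subseteq> CC" using X unfolding EE_def by blast
  have LP: "Y \<subseteq> L" if "Y \<in> CC" for Y using that CCP Fr by blast
  have "D \<subseteq> \<Inter>EE"
  proof
    fix d assume d: "d \<in> D"
    have dL: "d \<in> L" using d clubD unfolding club_def by blast
    show "d \<in> \<Inter>EE" unfolding EE_def
    proof
      fix i assume i1: "i \<in> L"
      have i: "i \<in> L" using i1 by auto
      show "d \<in> X i"
      proof (cases "strict_below r i d")
        case True
        then show ?thesis using d cl X i unfolding D_def by blast
      next
        case False
        then have "(d,i) \<in> r" using not_sb[OF ro] dL i Fr by blast
        then have "d \<in> H \<inter> under r i" using d cl H(1) unfolding D_def under_def by blast
        moreover have "X i \<inter> under r i = H \<inter> under r i" using X[OF i] by blast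
        ultimately have "d \<in> X i \<inter> under r i" by simp
        then show ?thesis by blast
      qed
    qed
  qed
  moreover have "\<Inter>EE \<subseteq> L"
  proof -
    obtain i where "i \<in> L" using inf infinite_imp_nonempty by blast
    then show ?thesis using X LP unfolding EE_def by blast
  qed
  ultimately have inF: "\<Inter>EE \<in> club_filter L r" using clubD unfolding club_filter_def by blast
  have "|EE| =o r"
  proof -
    have le: "|EE| \<le>o r" unfolding EE_def r by (rule card_of_image)
    have "\<not> |EE| <o r"
    proof
      assume small: "|EE| <o r"
      have exd: "\<exists>d\<in>L. (d \<in> Y) \<noteq> (d \<in> H)" if YE: "Y \<in> EE" for Y
      proof -
        obtain j where j: "j \<in> L" "Y = X j" using YE unfolding EE_def by blast
        have YH: "Y \<noteq> H" using X[OF j(1)] j(2) by blast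
        have sub: "Y \<subseteq> L" "H \<subseteq> L" using LP[OF H(1)] LP X[OF j(1)] j(2) by auto
        have "\<exists>d. (d \<in> Y) \<noteq> (d \<in> H)" using YH by (auto simp: set_eq_iff)
        then obtain d where d: "(d \<in> Y) \<noteq> (d \<in> H)" by blast
        then have "d \<in> L" using sub by blast
        then show ?thesis using d by blast
      qed
      define dd where "dd Y = (SOME d. d \<in> L \<and> (d \<in> Y) \<noteq> (d \<in> H))" for Y
      have dd: "dd Y \<in> L \<and> (dd Y \<in> Y) \<noteq> (dd Y \<in> H)" if "Y \<in> EE" for Y
      proof -
        have "\<exists>d. d \<in> L \<and> (d \<in> Y) \<noteq> (d \<in> H)" using exd[OF that] by blast
        then show ?thesis unfolding dd_def by (rule someI_ex)
      qed
      have "|dd ` EE| <o r" using card_of_image small ordLeq_ordLess_trans by blast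
      moreover have "dd ` EE \<subseteq> Field r" using dd Fr by blast
      ultimately obtain z where z: "z \<in> Field r" "\<forall>t\<in>dd ` EE. strict_below r t z"
        using bound[OF ro infr reg] by blast
      have zL: "z \<in> L" using z Fr by simp
      have XE: "X z \<in> EE" using zL unfolding EE_def by blast
      have "dd (X z) \<in> under r z" using z XE unfolding under_def strict_below_def by blast
      moreover have "X z \<inter> under r z = H \<inter> under r z" using X[OF zL] by blast
      ultimately have "(dd (X z) \<in> X z) = (dd (X z) \<in> H)" by (metis Int_iff)
      then show False using dd[OF XE] by blast
    qed
    then show ?thesis using le ordLeq_iff_ordLess_or_ordIso by blast
  qed
  then show "\<exists>EE\<subseteq>CC. |EE| =o r \<and> \<Inter> EE \<in> club_filter L r" using EEsub inF by blast
qed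

end

context includes cardinal_syntax begin
lemma inf_b:
  fixes f :: "nat \<Rightarrow> 'b set"
  assumes f: "\<forall>n. (card_of (Pow (f n)), card_of (f (Suc n))) \<in> ordLeq"
  shows "\<not> finite (UNIV :: 'b set)"
proof
  assume fin: "finite (UNIV :: 'b set)"
  have step: "card (Pow (f n)) \<le> card (f (Suc n))" for n
  proof -
    have "|Pow (f n)| \<le>o |f (Suc n)|" using f by blast
    then have "\<exists>g. inj_on g (Pow (f n)) \<and> g ` Pow (f n) \<subseteq> f (Suc n)"
      by (rule card_of_ordLeq[of "Pow (f n)" "f (Suc n)", THEN iffD2])
    then obtain g where g: "inj_on g (Pow (f n))" "g ` Pow (f n) \<subseteq> f (Suc n)" by blast
    have fin2: "finite (f (Suc n))" by (rule finite_subset[OF subset_UNIV fin])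
    show ?thesis by (rule card_inj_on_le[OF g fin2])
  qed
  have "n \<le> card (f n)" for n
  proof (induction n)
    case 0 then show ?case by simp
  next
    case (Suc n)
    have fn: "finite (f n)" by (rule finite_subset[OF subset_UNIV fin])
    have "Suc n \<le> 2 ^ n" by (induction n) auto
    also have "\<dots> \<le> 2 ^ card (f n)" using Suc by simp
    also have "\<dots> = card (Pow (f n))" using card_Pow[OF fn] by simp
    also have "\<dots> \<le> card (f (Suc n))" by (rule step)
    finally show ?case .
  qed
  moreover have "card (f n) \<le> card (UNIV :: 'b set)" for n by (rule card_mono[OF fin subset_UNIV])
  ultimately show False by (metis Suc_n_not_le_n le_trans)
qed

end

theorem proposition3p7:
  fixes K :: "'a set"
  assumes big: "\<exists>f :: nat \<Rightarrow> 'b set. (card_of K, card_of (f 0)) \<in> ordLeq \<and> (\<forall>n. (card_of (Pow (f n)), card_of (f (Suc n))) \<in> ordLeq)"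
  shows "\<exists>(L :: 'b set set) r.
           card_order_on L r \<and> regularCard r \<and> (card_of (UNIV :: nat set), r) \<in> ordLess \<and> (card_of K, r) \<in> ordLess \<and>
           Gal (club_filter L r) r (card_of (Pow L))"
proof -
  include cardinal_syntax
  obtain f :: "nat \<Rightarrow> 'b set" where f0: "|K| \<le>o |f 0|" and fS: "\<forall>n. |Pow (f n)| \<le>o |f (Suc n)|"
    using big by blast
  define B where "B = (UNIV :: 'b set)"
  have infB: "\<not> finite B" unfolding B_def using inf_b[OF fS] .
  define R where "R = {|A| | A :: 'b set set. |Pow B| <o |Pow A|}"
  have "|UNIV :: 'b set set| \<in> R"
  proof -
    have "Pow B = (UNIV :: 'b set set)" unfolding B_def by simp
    then have "|Pow B| <o |Pow (UNIV :: 'b set set)|" using card_of_Pow[of "UNIV :: 'b set set"] by simp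
    then show ?thesis unfolding R_def by blast
  qed
  moreover have "\<forall>r\<in>R. Card_order r" unfolding R_def using card_of_Card_order by blast
  ultimately obtain r0 where r0: "r0 \<in> R" "\<forall>r'\<in>R. r0 \<le>o r'"
    using exists_minim_Card_order[of R] by blast
  then obtain L :: "'b set set" where L: "r0 = |L|" and bigL: "|Pow B| <o |Pow L|" unfolding R_def by blast
  have P1: "|Pow A| \<le>o |Pow B|" if "|A| <o |L|" for A :: "'b set set"
  proof (rule ccontr)
    assume "\<not> ?thesis"
    then have "|Pow B| <o |Pow A|" using ordLess_or_ordLeq[OF card_of_Well_order card_of_Well_order] by blast
    then have "|A| \<in> R" unfolding R_def by blast
    then have "|L| \<le>o |A|" using r0 L by blast
    then show False using that not_ordLess_ordLeq by blast
  qed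
  then have P1': "\<forall>A :: 'b set set. |A| <o |L| \<longrightarrow> |Pow A| \<le>o |Pow B|" by blast
  have BL: "|B| <o |L|"
  proof (rule ccontr)
    assume "\<not> ?thesis"
    then have "|L| \<le>o |B|" using ordLess_or_ordLeq[OF card_of_Well_order card_of_Well_order] by blast
    then have "|Pow L| \<le>o |Pow B|" by (rule pow_mono)
    then show False using bigL not_ordLess_ordLeq by blast
  qed
  have infL: "\<not> finite L" using BL infB card_of_ordLeq_finite ordLess_imp_ordLeq by blast
  have natB: "|UNIV :: nat set| \<le>o |B|" using infB infinite_iff_card_of_nat by blast
  have nat: "|UNIV :: nat set| <o |L|" using natB BL ordLeq_ordLess_trans by blast
  have KB: "|K| \<le>o |B|"
  proof -
    have "|f 0| \<le>o |B|" unfolding B_def by (rule card_of_mono1) simp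
    then show ?thesis using f0 ordLeq_transitive by blast
  qed
  have KL: "|K| <o |L|" using KB BL ordLeq_ordLess_trans by blast
  have FB: "|L| \<le>o |Pow B|" unfolding B_def by (rule card_of_mono1) simp
  have ro: "Card_order |L|" by (rule card_of_Card_order)
  have Fr: "Field |L| = L" by (rule Field_card_of)
  have reg: "regularCard |L|"
  proof (rule regular_from_min[OF ro _ _ infB])
    show "\<not> finite (Field (card_of L))" using infL Fr by simp
    show "|B| <o |L|" by fact
    show "\<And>X::'b set set. |X| <o |L| \<Longrightarrow> |Pow X| \<le>o |Pow B|" using P1 by blast
    show "\<And>X::('b set \<times> 'b) set. |X| <o |L| \<Longrightarrow> |Pow X| \<le>o |Pow B|"
      using transport_small[OF P1'] by blast
    show "|Pow B| <o |Pow (Field (card_of L))|" using bigL Fr by simp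
  qed
  have gal: "Gal (club_filter L (card_of L)) (card_of L) (card_of (Pow L))"
    using gal_main[OF refl infL reg nat infB _ FB bigL] P1 by blast
  show ?thesis
    using card_of_card_order_on[of L] reg nat KL gal by blast
qed

end
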